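(* Let $P\subset\mathbb{R}^n$ be a smooth $n$-dimensional lattice polytope with codegree $c$ and nef value $\tau$. Then $\tau\in\mathbb{Q}_{>0}$ and $\tau>c-1$.
   Context: Write $P=\bigcap_{i=1}^r\{x:\langle\rho_i,x\rangle\ge -a_i\}$ with primitive inner facet normals $\rho_i$ and $a_i\in\mathbb{Z}$; $P$ is smooth if each vertex lies on exactly $n$ facet hyperplanes whose normals form a basis of $\mathbb{Z}^n$. $P^{(s)}=\bigcap_i\{\langle\rho_i,x\rangle\ge -a_i+s\}$. For a vertex $m$ with $\{m\}=\bigcap_{i=1}^n\{\langle\rho_i,x\rangle=-a_i\}$, $m(s)$ is defined by $\{m(s)\}=\bigcap_{i=1}^n\{\langle\rho_i,x\rangle=-a_i+s\}$; $P$ is $s$-spanned if $m(s)\in P^{(s)}$ for all vertices $m$. Codegree: $c=\operatorname{codeg}(P)=\min\{k\in\mathbb{N}:(kP)^{(1)}\cap\mathbb{Z}^n\ne\emptyset\}$. Nef value: $\tau=\tau(P)=\inf\{a/b: a,b\in\mathbb{Z}_{>0},\ aP\text{ is }b\text{-spanned}\}$. *)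

theory Defs
  imports "HOL-Analysis.Analysis"
begin

definition rvec :: "int^'n \<Rightarrow> real^'n" where
  "rvec v = (\<chi> j. real_of_int (v $ j))"

definition lattice_pt :: "real^'n \<Rightarrow> bool" where
  "lattice_pt x \<longleftrightarrow> (\<forall>j. x $ j \<in> \<int>)"

definition primitive :: "int^'n \<Rightarrow> bool" where
  "primitive v \<longleftrightarrow> v \<noteq> 0 \<and> (\<forall>(k::int) w. v = k *s w \<longrightarrow> \<bar>k\<bar> = 1)"

definition lattice_basis :: "('i \<Rightarrow> int^'n) \<Rightarrow> 'i set \<Rightarrow> bool" where
  "lattice_basis \<rho> J \<longleftrightarrow> finite J \<and> inj_on \<rho> J \<and>
     (\<forall>y::int^'n. \<exists>c::'i \<Rightarrow> int. y = (\<Sum>i\<in>J. c i *s \<rho> i)) \<and>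
     (\<forall>c::'i \<Rightarrow> int. (\<Sum>i\<in>J. c i *s \<rho> i) = 0 \<longrightarrow> (\<forall>i\<in>J. c i = 0))"

text \<open>P^(s) for the data (rho_i, a_i): intersection of { <rho_i,x> >= -a_i + s }. Note P = P^(0).\<close>
definition shifted :: "('i \<Rightarrow> int^'n) \<Rightarrow> ('i \<Rightarrow> int) \<Rightarrow> 'i set \<Rightarrow> int \<Rightarrow> (real^'n) set" where
  "shifted \<rho> a I s = {x. \<forall>i\<in>I. rvec (\<rho> i) \<bullet> x \<ge> - real_of_int (a i) + real_of_int s}"

definition tight :: "('i \<Rightarrow> int^'n) \<Rightarrow> ('i \<Rightarrow> int) \<Rightarrow> 'i set \<Rightarrow> real^'n \<Rightarrow> 'i set" where
  "tight \<rho> a I m = {i\<in>I. rvec (\<rho> i) \<bullet> m = - real_of_int (a i)}"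

definition shift_vertex :: "('i \<Rightarrow> int^'n) \<Rightarrow> ('i \<Rightarrow> int) \<Rightarrow> 'i set \<Rightarrow> real^'n \<Rightarrow> int \<Rightarrow> real^'n" where
  "shift_vertex \<rho> a I m s =
     (THE y. \<forall>i\<in>tight \<rho> a I m. rvec (\<rho> i) \<bullet> y = - real_of_int (a i) + real_of_int s)"

definition spanned :: "('i \<Rightarrow> int^'n) \<Rightarrow> ('i \<Rightarrow> int) \<Rightarrow> 'i set \<Rightarrow> int \<Rightarrow> bool" where
  "spanned \<rho> a I s \<longleftrightarrow>
     (\<forall>m. m extreme_point_of shifted \<rho> a I 0 \<longrightarrow> shift_vertex \<rho> a I m s \<in> shifted \<rho> a I s)"

text \<open>Dilation kP has data (rho_i, k a_i).\<close>
definition dil :: "int \<Rightarrow> ('i \<Rightarrow> int) \<Rightarrow> 'i \<Rightarrow> int" where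
  "dil k a = (\<lambda>i. k * a i)"

definition codeg :: "('i \<Rightarrow> int^'n) \<Rightarrow> ('i \<Rightarrow> int) \<Rightarrow> 'i set \<Rightarrow> nat" where
  "codeg \<rho> a I = (LEAST k::nat. k > 0 \<and>
      (\<exists>x. lattice_pt x \<and> x \<in> shifted \<rho> (dil (int k) a) I 1))"

definition nef_value :: "('i \<Rightarrow> int^'n) \<Rightarrow> ('i \<Rightarrow> int) \<Rightarrow> 'i set \<Rightarrow> real" where
  "nef_value \<rho> a I = Inf {real_of_int p / real_of_int q | p q. p > 0 \<and> q > 0 \<and>
      spanned \<rho> (dil p a) I q}"

definition smooth_lattice_polytope :: "('i \<Rightarrow> int^'n) \<Rightarrow> ('i \<Rightarrow> int) \<Rightarrow> 'i set \<Rightarrow> bool" where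
  "smooth_lattice_polytope \<rho> a I \<longleftrightarrow>
     (let P = shifted \<rho> a I 0 in
       finite I \<and> polytope P \<and> aff_dim P = int CARD('n) \<and>
       (\<forall>v. v extreme_point_of P \<longrightarrow> lattice_pt v) \<and>
       (\<forall>i\<in>I. primitive (\<rho> i)) \<and>
       bij_betw (\<lambda>i. P \<inter> {x. rvec (\<rho> i) \<bullet> x = - real_of_int (a i)}) I {F. F facet_of P} \<and>
       (\<forall>m. m extreme_point_of P \<longrightarrow>
          card (tight \<rho> a I m) = CARD('n) \<and> lattice_basis \<rho> (tight \<rho> a I m)))"

end

theory Submission
  imports Defs
begin

lemma vec_eqI: "(\<And>k. x $ k = y $ k) \<Longrightarrow> x = y" by (simp add: vec_eq_iff)

lemma rvec_inner: "rvec v \<bullet> z = (\<Sum>k\<in>UNIV. real_of_int (v $ k) * z $ k)"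
  by (simp add: rvec_def inner_vec_def)

lemma lb_unique:
  assumes "lattice_basis \<rho> J"
    and "(\<Sum>i\<in>J. c i *s \<rho> i) = (\<Sum>i\<in>J. d i *s \<rho> i)" and "i \<in> J"
  shows "c i = d i"
proof -
  have "(\<Sum>i\<in>J. (\<lambda>i. c i - d i) i *s \<rho> i) = 0"
  proof (rule vec_eqI)
    fix k
    have "(\<Sum>i\<in>J. c i *s \<rho> i) $ k = (\<Sum>i\<in>J. d i *s \<rho> i) $ k" using assms(2) by simp
    then have "(\<Sum>i\<in>J. c i * \<rho> i $ k) = (\<Sum>i\<in>J. d i * \<rho> i $ k)" by simp
    then show "(\<Sum>i\<in>J. (\<lambda>i. c i - d i) i *s \<rho> i) $ k = 0 $ k"
      by (simp add: left_diff_distrib sum_subtractf)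
  qed
  then show ?thesis using assms(1,3) unfolding lattice_basis_def by fastforce
qed

lemma lb_dual:
  assumes "lattice_basis \<rho> J"
  shows "\<exists>u::int^'n. \<forall>i\<in>J. rvec (\<rho> i) \<bullet> rvec u = 1"
proof -
  from assms have "\<forall>k. \<exists>c. axis k (1::int) = (\<Sum>j\<in>J. c j *s \<rho> j)"
    unfolding lattice_basis_def by blast
  then obtain C where C: "\<And>k. axis k (1::int) = (\<Sum>j\<in>J. C k j *s \<rho> j)" by metis
  have Cc: "\<And>k l. (if l = k then 1 else 0) = (\<Sum>j\<in>J. C k j * \<rho> j $ l)"
  proof -
    fix k l
    have "axis k (1::int) $ l = (\<Sum>j\<in>J. C k j *s \<rho> j) $ l" using C by simp
    then show "(if l = k then 1 else 0) = (\<Sum>j\<in>J. C k j * \<rho> j $ l)" by (simp add: axis_def)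
  qed
  define u :: "int^'n" where "u = (\<chi> k. \<Sum>j\<in>J. C k j)"
  have "\<forall>i\<in>J. (\<Sum>k\<in>UNIV. \<rho> i $ k * u $ k) = 1"
  proof
    fix i assume i: "i \<in> J"
    define G where "G j = (\<Sum>k\<in>UNIV. \<rho> i $ k * C k j)" for j
    have "(\<Sum>j\<in>J. G j *s \<rho> j) = (\<Sum>j\<in>J. (if j = i then 1 else 0) *s \<rho> j)"
    proof (rule vec_eqI)
      fix l
      have "(\<Sum>j\<in>J. G j *s \<rho> j) $ l = (\<Sum>j\<in>J. \<Sum>k\<in>UNIV. \<rho> i $ k * C k j * \<rho> j $ l)"
        by (simp add: G_def sum_distrib_right)
      also have "\<dots> = (\<Sum>k\<in>UNIV. \<rho> i $ k * (\<Sum>j\<in>J. C k j * \<rho> j $ l))"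
        by (subst sum.swap) (simp add: sum_distrib_left mult.assoc)
      also have "\<dots> = (\<Sum>k\<in>UNIV. \<rho> i $ k * (if l = k then 1 else 0))"
        by (simp add: Cc)
      also have "\<dots> = \<rho> i $ l" by (simp add: if_distrib cong: if_cong)
      finally show "(\<Sum>j\<in>J. G j *s \<rho> j) $ l = (\<Sum>j\<in>J. (if j = i then 1 else 0) *s \<rho> j) $ l"
        using i assms unfolding lattice_basis_def by (simp add: if_distrib[of "\<lambda>c. c * _"] cong: if_cong)
    qed
    then have Gj: "\<And>j. j \<in> J \<Longrightarrow> G j = (if j = i then 1 else 0)"
    proof -
      fix j assume "j \<in> J"
      from lb_unique[OF assms \<open>(\<Sum>j\<in>J. G j *s \<rho> j) = _\<close> this] show "G j = (if j = i then 1 else 0)" .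
    qed
    have "(\<Sum>k\<in>UNIV. \<rho> i $ k * u $ k) = (\<Sum>j\<in>J. G j)"
      unfolding u_def G_def by (simp add: sum_distrib_left) (rule sum.swap)
    also have "\<dots> = (\<Sum>j\<in>J. (if j = i then 1 else 0))" by (rule sum.cong) (auto simp: Gj)
    also have "\<dots> = 1" using i assms unfolding lattice_basis_def by simp
    finally show "(\<Sum>k\<in>UNIV. \<rho> i $ k * u $ k) = 1" .
  qed
  moreover have "rvec (\<rho> i) \<bullet> rvec u = real_of_int (\<Sum>k\<in>UNIV. \<rho> i $ k * u $ k)" for i
    unfolding rvec_inner by (simp add: rvec_def)
  ultimately have "\<forall>i\<in>J. rvec (\<rho> i) \<bullet> rvec u = 1" by (metis of_int_1)
  then show ?thesis by blast
qed

lemma lb_zero: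
  assumes "lattice_basis \<rho> J" and "\<forall>i\<in>J. rvec (\<rho> i) \<bullet> z = 0"
  shows "z = 0"
proof (rule vec_eqI)
  fix k
  from assms obtain c where c: "axis k (1::int) = (\<Sum>j\<in>J. c j *s \<rho> j)"
    unfolding lattice_basis_def by blast
  have cc: "\<And>l. (if l = k then 1 else 0) = (\<Sum>j\<in>J. c j * \<rho> j $ l)"
  proof -
    fix l
    have "axis k (1::int) $ l = (\<Sum>j\<in>J. c j *s \<rho> j) $ l" using c by simp
    then show "(if l = k then 1 else 0) = (\<Sum>j\<in>J. c j * \<rho> j $ l)" by (simp add: axis_def)
  qed
  have "z $ k = (\<Sum>l\<in>UNIV. real_of_int (if l = k then 1 else 0) * z $ l)"
    by (simp add: if_distrib[of real_of_int] if_distrib[of "\<lambda>c. c * z $ _"] cong: if_cong)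
  also have "\<dots> = (\<Sum>l\<in>UNIV. \<Sum>j\<in>J. real_of_int (c j) * (real_of_int (\<rho> j $ l) * z $ l))"
    by (simp add: cc sum_distrib_right mult.assoc)
  also have "\<dots> = (\<Sum>j\<in>J. real_of_int (c j) * (rvec (\<rho> j) \<bullet> z))"
    by (subst sum.swap) (simp add: rvec_inner sum_distrib_left)
  also have "\<dots> = 0" using assms(2) by simp
  finally show "z $ k = 0 $ k" by simp
qed

lemma shifted_dil:
  assumes "p > 0"
  shows "shifted \<rho> (dil p a) I 0 = (\<lambda>x. real_of_int p *\<^sub>R x) ` shifted \<rho> a I 0"
proof -
  have pp: "real_of_int p > 0" using assms by simp
  show ?thesis
  proof (intro set_eqI iffI)
    fix x assume x: "x \<in> shifted \<rho> (dil p a) I 0"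
    have "inverse (real_of_int p) *\<^sub>R x \<in> shifted \<rho> a I 0"
      unfolding shifted_def
    proof (intro CollectI ballI)
      fix i assume "i \<in> I"
      then have "rvec (\<rho> i) \<bullet> x \<ge> - (real_of_int p * real_of_int (a i))"
        using x by (simp add: shifted_def dil_def)
      then show "- real_of_int (a i) + real_of_int 0 \<le> rvec (\<rho> i) \<bullet> (inverse (real_of_int p) *\<^sub>R x)"
        using pp by (simp add: field_simps)
    qed
    moreover have "x = real_of_int p *\<^sub>R (inverse (real_of_int p) *\<^sub>R x)" using pp by simp
    ultimately show "x \<in> (\<lambda>x. real_of_int p *\<^sub>R x) ` shifted \<rho> a I 0" by blast
  next
    fix x assume "x \<in> (\<lambda>x. real_of_int p *\<^sub>R x) ` shifted \<rho> a I 0"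
    then obtain y where y: "y \<in> shifted \<rho> a I 0" and x: "x = real_of_int p *\<^sub>R y" by blast
    show "x \<in> shifted \<rho> (dil p a) I 0"
      unfolding shifted_def
    proof (intro CollectI ballI)
      fix i assume "i \<in> I"
      then have "rvec (\<rho> i) \<bullet> y \<ge> - real_of_int (a i)" using y by (simp add: shifted_def)
      then have "real_of_int p * (- real_of_int (a i)) \<le> real_of_int p * (rvec (\<rho> i) \<bullet> y)"
        using pp by (intro mult_left_mono) auto
      then show "- real_of_int (dil p a i) + real_of_int 0 \<le> rvec (\<rho> i) \<bullet> x"
        by (simp add: x dil_def)
    qed
  qed
qed

lemma ext_scale:
  assumes "c \<noteq> 0"
  shows "(y extreme_point_of (\<lambda>x. c *\<^sub>R x) ` S) \<longleftrightarrow> (\<exists>m. y = c *\<^sub>R m \<and> m extreme_point_of S)"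
proof -
  have lin: "linear (\<lambda>x::'a::real_vector. c *\<^sub>R x)" by (rule linear_scaleR)
  have inj: "inj (\<lambda>x::'a. c *\<^sub>R x)" using assms by (simp add: inj_on_def)
  have "y = c *\<^sub>R (inverse c *\<^sub>R y)" using assms by simp
  then obtain m where ym: "y = c *\<^sub>R m" by blast
  have "(y extreme_point_of (\<lambda>x. c *\<^sub>R x) ` S) \<longleftrightarrow> m extreme_point_of S"
    using face_of_linear_image[OF lin inj, of "{m}" S] by (simp add: ym face_of_singleton[symmetric])
  then show ?thesis using ym assms by (metis scaleR_cancel_left)
qed

lemma tight_dil:
  assumes "p \<noteq> 0"
  shows "tight \<rho> (dil p a) I (real_of_int p *\<^sub>R m) = tight \<rho> a I m"
proof -
  have e: "(real_of_int p * x = - real_of_int (p * y)) = (x = - real_of_int y)" for x :: real and y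
  proof -
    have "real_of_int p * x = - real_of_int (p * y) \<longleftrightarrow> real_of_int p * x = real_of_int p * (- real_of_int y)"
      by (simp only: of_int_mult mult_minus_right)
    also have "\<dots> \<longleftrightarrow> x = - real_of_int y" by (metis assms mult_cancel_left of_int_eq_0_iff)
    finally show ?thesis .
  qed
  show ?thesis unfolding tight_def dil_def inner_scaleR_right e ..
qed

lemma sv_eq:
  assumes lb: "lattice_basis \<rho> (tight \<rho> a I m)"
    and u: "\<forall>i\<in>tight \<rho> a I m. rvec (\<rho> i) \<bullet> u = 1"
  shows "shift_vertex \<rho> a I m s = m + real_of_int s *\<^sub>R u"
  unfolding shift_vertex_def
proof (rule the_equality)
  show "\<forall>i\<in>tight \<rho> a I m. rvec (\<rho> i) \<bullet> (m + real_of_int s *\<^sub>R u) = - real_of_int (a i) + real_of_int s"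
  proof
    fix i assume i: "i \<in> tight \<rho> a I m"
    then have "rvec (\<rho> i) \<bullet> m = - real_of_int (a i)" by (simp add: tight_def)
    moreover have "rvec (\<rho> i) \<bullet> u = 1" using u i by blast
    ultimately show "rvec (\<rho> i) \<bullet> (m + real_of_int s *\<^sub>R u) = - real_of_int (a i) + real_of_int s"
      by (simp add: inner_add_right)
  qed
next
  fix y assume y: "\<forall>i\<in>tight \<rho> a I m. rvec (\<rho> i) \<bullet> y = - real_of_int (a i) + real_of_int s"
  have "\<forall>i\<in>tight \<rho> a I m. rvec (\<rho> i) \<bullet> (y - (m + real_of_int s *\<^sub>R u)) = 0"
  proof
    fix i assume i: "i \<in> tight \<rho> a I m"
    then have "rvec (\<rho> i) \<bullet> m = - real_of_int (a i)" by (simp add: tight_def)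
    moreover have "rvec (\<rho> i) \<bullet> u = 1" using u i by blast
    moreover have "rvec (\<rho> i) \<bullet> y = - real_of_int (a i) + real_of_int s" using y i by blast
    ultimately show "rvec (\<rho> i) \<bullet> (y - (m + real_of_int s *\<^sub>R u)) = 0"
      by (simp add: inner_add_right inner_diff_right)
  qed
  from lb_zero[OF lb this] show "y = m + real_of_int s *\<^sub>R u" by simp
qed

lemma aux_cond:
  fixes p q d e :: real
  assumes "p > 0" "q > 0" "d \<ge> 0" "d = 0 \<Longrightarrow> e = 1"
  shows "(p * d + q * (e - 1) \<ge> 0) \<longleftrightarrow> (d > 0 \<longrightarrow> (1 - e) / d \<le> p / q)"
proof (cases "d = 0")
  case True then show ?thesis using assms by simp
next
  case False then have "d > 0" using assms by simp
  then show ?thesis using assms by (auto simp: field_simps)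
qed

theorem lemma2p4:
  fixes \<rho> :: "'i \<Rightarrow> int^'n" and a :: "'i \<Rightarrow> int" and I :: "'i set"
  assumes "smooth_lattice_polytope \<rho> a I"
  shows "nef_value \<rho> a I \<in> \<rat> \<and> nef_value \<rho> a I > 0 \<and>
         nef_value \<rho> a I > real (codeg \<rho> a I) - 1"
proof -
  define P where "P = shifted \<rho> a I 0"
  define V where "V = {m. m extreme_point_of P}"
  have finI: "finite I" and poly: "polytope P" and affd: "aff_dim P = int CARD('n)"
    and lat: "\<And>v. v extreme_point_of P \<Longrightarrow> lattice_pt v"
    and sm: "\<And>m. m extreme_point_of P \<Longrightarrow> card (tight \<rho> a I m) = CARD('n) \<and> lattice_basis \<rho> (tight \<rho> a I m)"
    using assms unfolding smooth_lattice_polytope_def Let_def P_def by blast+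
  obtain vs where vs: "finite vs" "P = convex hull vs" using poly unfolding polytope_def by blast
  have finV: "finite V" unfolding V_def using vs extreme_points_of_convex_hull finite_subset by metis
  have "P \<noteq> {}" using affd by auto
  then have "V \<noteq> {}" unfolding V_def using Krein_Milman_polytope[OF vs(1)] vs(2) by auto
  have bP: "bounded P" using vs by (simp add: compact_imp_bounded finite_imp_compact_convex_hull)
  have VP: "m \<in> V \<Longrightarrow> m \<in> P" for m unfolding V_def extreme_point_of_def by blast
  have "\<forall>m\<in>V. \<exists>u::int^'n. \<forall>i\<in>tight \<rho> a I m. rvec (\<rho> i) \<bullet> rvec u = 1"
    using sm lb_dual unfolding V_def by blast
  then obtain U where U: "\<And>m i. m \<in> V \<Longrightarrow> i \<in> tight \<rho> a I m \<Longrightarrow> rvec (\<rho> i) \<bullet> rvec (U m) = 1"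
    by metis
  define d where "d m j = rvec (\<rho> j) \<bullet> m + real_of_int (a j)" for m j
  define e where "e m j = rvec (\<rho> j) \<bullet> rvec (U m)" for m j
  have d0: "d m j \<ge> 0" if "m \<in> V" "j \<in> I" for m j
    using VP[OF that(1)] that(2) unfolding P_def shifted_def d_def by auto
  have dt: "e m j = 1" if "m \<in> V" "j \<in> I" "d m j = 0" for m j
    using U[OF that(1), of j] that unfolding d_def e_def tight_def by auto
  have dint: "d m j \<in> \<int>" if "m \<in> V" for m j
  proof -
    have "\<forall>k. m $ k \<in> \<int>" using lat that unfolding V_def lattice_pt_def by blast
    then show ?thesis unfolding d_def rvec_inner by (intro Ints_add Ints_sum Ints_mult) auto
  qed
  have eint: "e m j \<in> \<int>" for m j
    unfolding e_def rvec_inner by (intro Ints_sum Ints_mult) (auto simp: rvec_def)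
  have sv: "shift_vertex \<rho> (dil p a) I (real_of_int p *\<^sub>R m) q
        = real_of_int p *\<^sub>R m + real_of_int q *\<^sub>R rvec (U m)" if "m \<in> V" "p \<noteq> 0" for m p q
    using sv_eq[of \<rho> "dil p a" I "real_of_int p *\<^sub>R m" "rvec (U m)" q] U[OF that(1)] sm[of m] that
    unfolding tight_dil[OF that(2)] V_def by auto
  have extP: "(y extreme_point_of shifted \<rho> (dil p a) I 0) \<longleftrightarrow> (\<exists>m. y = real_of_int p *\<^sub>R m \<and> m \<in> V)"
    if "p > 0" for y p
    using ext_scale[of "real_of_int p" y P] that unfolding shifted_dil[OF that] P_def V_def by auto
  have key: "spanned \<rho> (dil p a) I q \<longleftrightarrow>
      (\<forall>m\<in>V. \<forall>j\<in>I. real_of_int p * d m j + real_of_int q * (e m j - 1) \<ge> 0)"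
    if "p > 0" "q > 0" for p q
  proof -
    have "spanned \<rho> (dil p a) I q \<longleftrightarrow>
      (\<forall>m\<in>V. real_of_int p *\<^sub>R m + real_of_int q *\<^sub>R rvec (U m) \<in> shifted \<rho> (dil p a) I q)"
      unfolding spanned_def extP[OF that(1)] using sv that by auto
    also have "\<dots> \<longleftrightarrow> (\<forall>m\<in>V. \<forall>j\<in>I. real_of_int p * d m j + real_of_int q * (e m j - 1) \<ge> 0)"
      unfolding shifted_def d_def e_def dil_def
      by (simp add: inner_add_right algebra_simps)
    finally show ?thesis .
  qed
  obtain m0 where m0: "m0 \<in> V" using \<open>V \<noteq> {}\<close> by blast
  have "\<exists>j\<in>I. e m0 j < 1"
  proof (rule ccontr)
    assume "\<not> (\<exists>j\<in>I. e m0 j < 1)"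
    then have ge: "\<And>j. j \<in> I \<Longrightarrow> e m0 j \<ge> 1" by auto
    define u where "u = rvec (U m0)"
    have inP: "m0 + t *\<^sub>R u \<in> P" if "t \<ge> 0" for t
      unfolding P_def shifted_def
    proof (intro CollectI ballI)
      fix j assume j: "j \<in> I"
      have "t * e m0 j \<ge> 0" using ge[OF j] that by simp
      moreover have "d m0 j \<ge> 0" using d0[OF m0 j] .
      ultimately show "- real_of_int (a j) + real_of_int 0 \<le> rvec (\<rho> j) \<bullet> (m0 + t *\<^sub>R u)"
        unfolding d_def e_def u_def by (simp add: inner_add_right)
    qed
    have "card (tight \<rho> a I m0) = CARD('n)" using sm m0 unfolding V_def by blast
    then have "tight \<rho> a I m0 \<noteq> {}" using zero_less_card_finite[where 'a='n] by auto
    then obtain i0 where i0: "i0 \<in> tight \<rho> a I m0" by blast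
    have "rvec (\<rho> i0) \<bullet> u = 1" using U[OF m0 i0] u_def by simp
    then have u0: "u \<noteq> 0" by auto
    from bP obtain B where B: "\<And>x. x \<in> P \<Longrightarrow> norm x \<le> B" unfolding bounded_iff by blast
    define t where "t = (B + norm m0 + 1) / norm u"
    have nu: "norm u > 0" using u0 by simp
    have "B \<ge> norm m0" using B VP[OF m0] by blast
    then have "B + norm m0 + 1 > 0" by (smt (verit) norm_ge_zero)
    then have t0: "t \<ge> 0" unfolding t_def using nu by simp
    have "norm (t *\<^sub>R u) - norm m0 \<le> norm (t *\<^sub>R u + m0)"
      by (rule norm_diff_ineq)
    moreover have "norm (t *\<^sub>R u) = B + norm m0 + 1"
      using t0 nu \<open>B + norm m0 + 1 > 0\<close> unfolding t_def by simp
    ultimately have "norm (m0 + t *\<^sub>R u) \<ge> B + 1" by (simp add: add.commute)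
    with B[OF inP[OF t0]] show False by simp
  qed
  then obtain j0 where j0: "j0 \<in> I" "e m0 j0 < 1" by blast
  have dpos: "d m0 j0 > 0" using d0[OF m0 j0(1)] dt[OF m0 j0(1)] j0(2) by force
  define F where "F = (\<lambda>(m,j). (1 - e m j) / d m j) ` {(m,j). m \<in> V \<and> j \<in> I \<and> d m j > 0}"
  have finF: "finite F" unfolding F_def
    by (rule finite_imageI, rule finite_subset[of _ "V \<times> I"]) (use finV finI in auto)
  have f0: "(1 - e m0 j0) / d m0 j0 \<in> F" unfolding F_def using m0 j0 dpos by force
  have f0pos: "(1 - e m0 j0) / d m0 j0 > 0" using dpos j0 by simp
  have Fne: "F \<noteq> {}" using f0 by blast
  define T where "T = Max F"
  have TF: "T \<in> F" unfolding T_def using finF Fne by simp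
  have Tpos: "T > 0" using Max_ge[OF finF f0] f0pos unfolding T_def by linarith
  have cond: "spanned \<rho> (dil p a) I q \<longleftrightarrow> T \<le> real_of_int p / real_of_int q"
    if "p > 0" "q > 0" for p q
  proof -
    have "spanned \<rho> (dil p a) I q \<longleftrightarrow>
      (\<forall>m\<in>V. \<forall>j\<in>I. d m j > 0 \<longrightarrow> (1 - e m j) / d m j \<le> real_of_int p / real_of_int q)"
      unfolding key[OF that] using aux_cond[of "real_of_int p" "real_of_int q"] that d0 dt by simp
    also have "\<dots> \<longleftrightarrow> (\<forall>f\<in>F. f \<le> real_of_int p / real_of_int q)"
      unfolding F_def by auto
    also have "\<dots> \<longleftrightarrow> T \<le> real_of_int p / real_of_int q"
      unfolding T_def using finF Fne by simp
    finally show ?thesis .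
  qed
  from TF obtain m1 j1 where m1: "m1 \<in> V" "j1 \<in> I" "d m1 j1 > 0" and Teq: "T = (1 - e m1 j1) / d m1 j1"
    unfolding F_def by auto
  obtain D where D: "d m1 j1 = real_of_int D" using dint[OF m1(1)] Ints_cases by metis
  obtain E where E: "e m1 j1 = real_of_int E" using eint Ints_cases by metis
  have Dpos: "D > 0" using m1(3) D by simp
  have Epos: "1 - E > 0" using Tpos Teq m1(3) E by (simp add: zero_less_divide_iff)
  have TDE: "T = real_of_int (1 - E) / real_of_int D" using Teq D E by simp
  define S where "S = {real_of_int p / real_of_int q | p q. p > 0 \<and> q > 0 \<and> spanned \<rho> (dil p a) I q}"
  have TS: "T \<in> S" unfolding S_def
  proof (intro CollectI exI conjI)
    show "T = real_of_int (1 - E) / real_of_int D" by (rule TDE)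
    show "spanned \<rho> (dil (1 - E) a) I D" using cond[OF Epos Dpos] TDE by simp
  qed (use Dpos Epos in auto)
  have Tlow: "T \<le> x" if "x \<in> S" for x using that cond unfolding S_def by auto
  have nefT: "nef_value \<rho> a I = T"
    unfolding nef_value_def S_def[symmetric] by (rule cInf_eq_minimum[OF TS Tlow])
  have TQ: "T \<in> \<rat>" unfolding TDE by (intro Rats_divide Rats_of_int)
  define c where "c = codeg \<rho> a I"
  have "T > real c - 1"
  proof (rule ccontr)
    assume "\<not> T > real c - 1"
    then have cT: "real c - 1 \<ge> T" by simp
    then have "c \<ge> 2" using Tpos by simp
    define k where "k = c - 1"
    have k: "k > 0" "c = Suc k" "T \<le> real k" using \<open>c \<ge> 2\<close> cT unfolding k_def by auto
    have kp: "int k > 0" using k by simp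
    have sp: "spanned \<rho> (dil (int k) a) I 1" using cond[OF kp] k by simp
    have ext: "real_of_int (int k) *\<^sub>R m0 extreme_point_of shifted \<rho> (dil (int k) a) I 0"
      using extP[OF kp] m0 by blast
    define y where "y = shift_vertex \<rho> (dil (int k) a) I (real_of_int (int k) *\<^sub>R m0) 1"
    have yin: "y \<in> shifted \<rho> (dil (int k) a) I 1" using sp ext unfolding spanned_def y_def by blast
    have yeq: "y = real_of_int (int k) *\<^sub>R m0 + rvec (U m0)"
      unfolding y_def using sv[OF m0, of "int k" 1] kp by simp
    have "\<forall>k. m0 $ k \<in> \<int>" using lat m0 unfolding V_def lattice_pt_def by blast
    then have "lattice_pt y" unfolding yeq lattice_pt_def by (auto simp: rvec_def)
    then have "codeg \<rho> a I \<le> k" unfolding codeg_def using yin k(1) by (intro Least_le) blast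
    then show False using k unfolding c_def by simp
  qed
  then show ?thesis using nefT TQ Tpos unfolding c_def by simp
qed
end
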